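(* Let $H \cong K_n - xy$ where $xy \in E(K_n)$, and let $g$ be a demand function for $H$. If $L$ is a fractional list-assignment for $H$ such that (i) for each $v\in V(H)\setminus\{x, y\}$, $\mu(L(v)) \geq \max\{g(x), g(y)\} + \sum_{u\in V(H)\setminus \{x, y\}}g(u)$, (ii) $\mu(L(x)) \geq g(x)$ and $\mu(L(y)) \geq g(y)$, and (iii) $\mu(L(x)) + \mu(L(y)) \geq \sum_{v\in V(H)}g(v)$, then $H$ has a fractional $(g, L)$-coloring.
   Context: $\mu$ is Lebesgue measure. A demand function for a graph $H$ is a function $g: V(H)\to [0,1]\cap\mathbb{Q}$. A fractional list-assignment is a function $L$ assigning to each vertex a measurable subset $L(v)\subseteq[0,1]$. A fractional $(g,L)$-coloring of $H$ is an assignment $\phi$ of measurable sets $\phi(v)\subseteq L(v)$ with $\mu(\phi(v))\geq g(v)$ for every vertex and $\phi(u)\cap\phi(v)=\varnothing$ for every edge $uv$ of $H$. *)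

theory Defs
  imports "HOL-Analysis.Analysis"
begin

definition Kn_minus_edge :: "'a set \<Rightarrow> 'a \<Rightarrow> 'a \<Rightarrow> 'a \<Rightarrow> 'a \<Rightarrow> bool" where
  "Kn_minus_edge V x y u v \<longleftrightarrow> u \<in> V \<and> v \<in> V \<and> u \<noteq> v \<and> {u, v} \<noteq> {x, y}"

definition demand_function :: "'a set \<Rightarrow> ('a \<Rightarrow> real) \<Rightarrow> bool" where
  "demand_function V g \<longleftrightarrow> (\<forall>v\<in>V. g v \<in> {0..1} \<inter> \<rat>)"

definition frac_list_assignment :: "'a set \<Rightarrow> ('a \<Rightarrow> real set) \<Rightarrow> bool" where
  "frac_list_assignment V L \<longleftrightarrow> (\<forall>v\<in>V. L v \<in> sets lebesgue \<and> L v \<subseteq> {0..1})"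

definition frac_coloring ::
  "'a set \<Rightarrow> ('a \<Rightarrow> 'a \<Rightarrow> bool) \<Rightarrow> ('a \<Rightarrow> real) \<Rightarrow> ('a \<Rightarrow> real set) \<Rightarrow> ('a \<Rightarrow> real set) \<Rightarrow> bool" where
  "frac_coloring V E g L \<phi> \<longleftrightarrow>
     (\<forall>v\<in>V. \<phi> v \<in> sets lebesgue \<and> \<phi> v \<subseteq> L v \<and> measure lebesgue (\<phi> v) \<ge> g v) \<and>
     (\<forall>u\<in>V. \<forall>v\<in>V. E u v \<longrightarrow> \<phi> u \<inter> \<phi> v = {})"

end

theory Submission
  imports Defs
begin

lemma lmeas_sub: "A \<in> sets lebesgue \<Longrightarrow> A \<subseteq> {0..1::real} \<Longrightarrow> A \<in> lmeasurable"
  by (rule fmeasurableI2[of "{0..1}"]) auto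

lemma exact_sub:
  assumes A: "A \<in> sets lebesgue" "A \<subseteq> {0..1::real}" and t: "0 \<le> t" "t \<le> measure lebesgue A"
  shows "\<exists>B. B \<in> sets lebesgue \<and> B \<subseteq> A \<and> measure lebesgue B = t"
proof -
  define f where "f s = measure lebesgue (A \<inter> {..s})" for s
  have Al: "A \<in> lmeasurable" using lmeas_sub A by blast
  have fl: "A \<inter> {..s} \<in> lmeasurable" for s using Al by (simp add: fmeasurable_Int_fmeasurable)
  have mono: "f s \<le> f u" if "s \<le> u" for s u
    unfolding f_def using that fl by (intro measure_mono_fmeasurable) auto
  have up: "f u \<le> f s + (u - s)" if "s \<le> u" for s u
  proof -
    have "f u \<le> measure lebesgue ((A \<inter> {..s}) \<union> {s..u})"
      unfolding f_def using fl by (intro measure_mono_fmeasurable) auto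
    also have "\<dots> \<le> f s + measure lebesgue {s..u}"
      unfolding f_def using fl by (intro measure_Un_le) auto
    finally show ?thesis using that by simp
  qed
  have "1-lipschitz_on {-1..1} f"
  proof (rule lipschitz_onI)
    fix s u :: real
    show "dist (f s) (f u) \<le> 1 * dist s u"
    proof (cases "s \<le> u")
      case True then show ?thesis using mono[OF True] up[OF True] by (simp add: dist_real_def)
    next
      case False then have "u \<le> s" by simp
      then show ?thesis using mono[of u s] up[of u s] by (simp add: dist_real_def)
    qed
  qed simp
  then have c: "continuous_on {-1..1} f" by (rule lipschitz_on_continuous_on)
  have f0: "f (-1) = 0"
  proof -
    have "A \<inter> {..-1} = {}" using A by auto
    then show ?thesis unfolding f_def by simp
  qed
  have f1: "f 1 = measure lebesgue A"
  proof -
    have "A \<inter> {..1} = A" using A by auto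
    then show ?thesis unfolding f_def by simp
  qed
  obtain s where "f s = t" using IVT'[of f "-1" t 1] c f0 f1 t by auto
  then show ?thesis unfolding f_def using A by (intro exI[of _ "A \<inter> {..s}"]) auto
qed
lemma num:
  fixes rz rA rB rAB MA MB a b m G g :: real
  assumes "0 \<le> rz" "0 \<le> rA" "0 \<le> rB" "0 \<le> rAB"
   "rz+rA+rB+rAB \<ge> m+G" "MA \<ge> rA+rAB" "MB \<ge> rB+rAB" "MA \<ge> a" "MB \<ge> b" "MA+MB \<ge> a+b+G"
   "0 \<le> g" "g \<le> G" "0 \<le> a" "a \<le> m" "b \<le> m"
  shows "\<exists>t0 tA tB tAB. 0 \<le> t0 \<and> 0 \<le> tA \<and> 0 \<le> tB \<and> 0 \<le> tAB \<and> t0 \<le> rz \<and> tA \<le> rA \<and> tB \<le> rB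
     \<and> tAB \<le> rAB \<and> t0+tA+tB+tAB = g \<and> tA+tAB \<le> MA - a \<and> tB+tAB \<le> MB - b
     \<and> (MA - tA - tAB)+(MB - tB - tAB) \<ge> a+b+G-g"
proof -
  define t0 where "t0 = min g rz"
  define tA where "tA = min (g - t0) (min rA (MA - a))"
  define tB where "tB = min (g - t0 - tA) (min rB (MB - b))"
  define tAB where "tAB = g - t0 - tA - tB"
  show ?thesis
    apply (rule exI[of _ t0], rule exI[of _ tA], rule exI[of _ tB], rule exI[of _ tAB])
    using assms unfolding tAB_def tB_def tA_def t0_def
    by (auto simp: min_def split: if_splits)
qed

lemma mU: "X \<in> lmeasurable \<Longrightarrow> Y \<in> lmeasurable \<Longrightarrow> X \<inter> Y = {} \<Longrightarrow>
  measure lebesgue (X \<union> Y) = measure lebesgue X + measure lebesgue Y"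
  by (simp add: measure_Un3)

lemma step:
  assumes A: "A \<in> sets lebesgue" "A \<subseteq> {0..1::real}"
    and B: "B \<in> sets lebesgue" "B \<subseteq> {0..1::real}"
    and L: "L \<in> sets lebesgue" "L \<subseteq> {0..1::real}"
    and h: "measure lebesgue A \<ge> a" "measure lebesgue B \<ge> b"
      "measure lebesgue A + measure lebesgue B \<ge> a + b + G"
      "measure lebesgue L \<ge> m + G" "0 \<le> g" "g \<le> G" "0 \<le> a" "a \<le> m" "b \<le> m"
  shows "\<exists>T. T \<in> sets lebesgue \<and> T \<subseteq> L \<and> measure lebesgue T = g \<and>
     measure lebesgue (A - T) \<ge> a \<and> measure lebesgue (B - T) \<ge> b \<and>
     measure lebesgue (A - T) + measure lebesgue (B - T) \<ge> a + b + (G - g)"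
proof -
  define R0 where "R0 = L - (A \<union> B)"
  define RA where "RA = (L \<inter> A) - B"
  define RB where "RB = (L \<inter> B) - A"
  define RAB where "RAB = L \<inter> A \<inter> B"
  have Al: "A \<in> lmeasurable" and Bl: "B \<in> lmeasurable" and Ll: "L \<in> lmeasurable"
    using A B L lmeas_sub by blast+
  have s: "R0 \<in> sets lebesgue" "RA \<in> sets lebesgue" "RB \<in> sets lebesgue" "RAB \<in> sets lebesgue"
    unfolding R0_def RA_def RB_def RAB_def using A B L by auto
  have sub: "R0 \<subseteq> {0..1}" "RA \<subseteq> {0..1}" "RB \<subseteq> {0..1}" "RAB \<subseteq> {0..1}"
    unfolding R0_def RA_def RB_def RAB_def using L by auto
  have l: "R0 \<in> lmeasurable" "RA \<in> lmeasurable" "RB \<in> lmeasurable" "RAB \<in> lmeasurable"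
    using s sub lmeas_sub by blast+
  have LU: "L = R0 \<union> RA \<union> RB \<union> RAB" unfolding R0_def RA_def RB_def RAB_def by auto
  have mL: "measure lebesgue L = measure lebesgue R0 + measure lebesgue RA + measure lebesgue RB + measure lebesgue RAB"
    unfolding LU using l
    by (subst mU; (auto simp: R0_def RA_def RB_def RAB_def)?; subst mU; (auto simp: R0_def RA_def RB_def RAB_def)?; subst mU; auto simp: R0_def RA_def RB_def RAB_def)
  have mA: "measure lebesgue A \<ge> measure lebesgue RA + measure lebesgue RAB"
  proof -
    have "measure lebesgue RA + measure lebesgue RAB = measure lebesgue (RA \<union> RAB)"
      using l by (subst mU) (auto simp: RA_def RAB_def)
    also have "\<dots> \<le> measure lebesgue A"
      using l Al by (intro measure_mono_fmeasurable) (auto simp: RA_def RAB_def)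
    finally show ?thesis .
  qed
  have mB: "measure lebesgue B \<ge> measure lebesgue RB + measure lebesgue RAB"
  proof -
    have "measure lebesgue RB + measure lebesgue RAB = measure lebesgue (RB \<union> RAB)"
      using l by (subst mU) (auto simp: RB_def RAB_def)
    also have "\<dots> \<le> measure lebesgue B"
      using l Bl by (intro measure_mono_fmeasurable) (auto simp: RB_def RAB_def)
    finally show ?thesis .
  qed
  have "\<exists>t0 tA tB tAB. 0 \<le> t0 \<and> 0 \<le> tA \<and> 0 \<le> tB \<and> 0 \<le> tAB \<and> t0 \<le> measure lebesgue R0 \<and> tA \<le> measure lebesgue RA \<and> tB \<le> measure lebesgue RB
     \<and> tAB \<le> measure lebesgue RAB \<and> t0+tA+tB+tAB = g \<and> tA+tAB \<le> measure lebesgue A - a \<and> tB+tAB \<le> measure lebesgue B - b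
     \<and> (measure lebesgue A - tA - tAB)+(measure lebesgue B - tB - tAB) \<ge> a+b+G-g"
    by (rule num[where rz="measure lebesgue R0" and rA="measure lebesgue RA" and rB="measure lebesgue RB" and rAB="measure lebesgue RAB" and MA="measure lebesgue A" and MB="measure lebesgue B" and m=m and G=G and g=g and a=a and b=b]) (use mL mA mB h in \<open>auto simp: measure_nonneg\<close>)
  then obtain t0 tA tB tAB where t: "0 \<le> t0" "0 \<le> tA" "0 \<le> tB" "0 \<le> tAB"
     "t0 \<le> measure lebesgue R0" "tA \<le> measure lebesgue RA" "tB \<le> measure lebesgue RB"
     "tAB \<le> measure lebesgue RAB" "t0+tA+tB+tAB = g" "tA+tAB \<le> measure lebesgue A - a"
     "tB+tAB \<le> measure lebesgue B - b"
     "(measure lebesgue A - tA - tAB)+(measure lebesgue B - tB - tAB) \<ge> a+b+G-g"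
    by blast
  obtain T0 where T0: "T0 \<in> sets lebesgue" "T0 \<subseteq> R0" "measure lebesgue T0 = t0"
    using exact_sub[OF s(1) sub(1) t(1) t(5)] by blast
  obtain TA where TA: "TA \<in> sets lebesgue" "TA \<subseteq> RA" "measure lebesgue TA = tA"
    using exact_sub[OF s(2) sub(2) t(2) t(6)] by blast
  obtain TB where TB: "TB \<in> sets lebesgue" "TB \<subseteq> RB" "measure lebesgue TB = tB"
    using exact_sub[OF s(3) sub(3) t(3) t(7)] by blast
  obtain TAB where TAB: "TAB \<in> sets lebesgue" "TAB \<subseteq> RAB" "measure lebesgue TAB = tAB"
    using exact_sub[OF s(4) sub(4) t(4) t(8)] by blast
  have Tl: "T0 \<in> lmeasurable" "TA \<in> lmeasurable" "TB \<in> lmeasurable" "TAB \<in> lmeasurable"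
    using T0 TA TB TAB sub lmeas_sub by (meson order_trans)+
  define T where "T = T0 \<union> TA \<union> TB \<union> TAB"
  have Ts: "T \<in> sets lebesgue" unfolding T_def using T0 TA TB TAB by auto
  have TL: "T \<subseteq> L" unfolding T_def using T0 TA TB TAB LU by auto
  have d: "T0 \<inter> TA = {}" "T0 \<inter> TB = {}" "T0 \<inter> TAB = {}" "TA \<inter> TB = {}" "TA \<inter> TAB = {}" "TB \<inter> TAB = {}"
    using T0(2) TA(2) TB(2) TAB(2) unfolding R0_def RA_def RB_def RAB_def by blast+
  have m1: "measure lebesgue (T0 \<union> TA) = t0 + tA" using mU[OF Tl(1,2) d(1)] T0 TA by simp
  have m2: "measure lebesgue (T0 \<union> TA \<union> TB) = t0 + tA + tB"
    using mU[OF fmeasurable.Un[OF Tl(1,2)] Tl(3)] d m1 TB by (simp add: Int_Un_distrib2)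
  have m3: "measure lebesgue (T0 \<union> TA \<union> TB \<union> TAB) = t0 + tA + tB + tAB"
    using mU[OF fmeasurable.Un[OF fmeasurable.Un[OF Tl(1,2)] Tl(3)] Tl(4)] d m2 TAB by (simp add: Int_Un_distrib2)
  have mT: "measure lebesgue T = g" unfolding T_def using m3 t(9) by simp
  have AT: "A \<inter> T = TA \<union> TAB" unfolding T_def using T0 TA TB TAB
    by (auto simp: R0_def RA_def RB_def RAB_def)
  have BT: "B \<inter> T = TB \<union> TAB" unfolding T_def using T0 TA TB TAB
    by (auto simp: R0_def RA_def RB_def RAB_def)
  have mAT: "measure lebesgue (A \<inter> T) = tA + tAB" unfolding AT using Tl TA TAB
    by (subst mU) (auto simp: RA_def RAB_def)
  have mBT: "measure lebesgue (B \<inter> T) = tB + tAB" unfolding BT using Tl TB TAB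
    by (subst mU) (auto simp: RB_def RAB_def)
  have dA: "measure lebesgue (A - T) = measure lebesgue A - (tA + tAB)"
  proof -
    have "A - T = A - (A \<inter> T)" by auto
    then show ?thesis using measurable_measure_Diff[OF Al, of "A \<inter> T"] Ts A mAT by auto
  qed
  have dB: "measure lebesgue (B - T) = measure lebesgue B - (tB + tAB)"
  proof -
    have "B - T = B - (B \<inter> T)" by auto
    then show ?thesis using measurable_measure_Diff[OF Bl, of "B \<inter> T"] Ts B mBT by auto
  qed
  show ?thesis using Ts TL mT dA dB t by (intro exI[of _ T]) auto
qed

lemma diff_ge: "X \<in> lmeasurable \<Longrightarrow> T \<in> lmeasurable \<Longrightarrow>
   measure lebesgue (X - T) \<ge> measure lebesgue X - measure lebesgue T"
proof -
  assume X: "X \<in> lmeasurable" and T: "T \<in> lmeasurable"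
  have e: "X = (X - T) \<union> (X \<inter> T)" by blast
  have "measure lebesgue X \<le> measure lebesgue (X - T) + measure lebesgue (X \<inter> T)"
    using measure_Un_le[of "X - T" lebesgue "X \<inter> T"] X T e by (metis fmeasurableD sets.Diff sets.Int)
  moreover have "measure lebesgue (X \<inter> T) \<le> measure lebesgue T"
    using X T by (intro measure_mono_fmeasurable) auto
  ultimately show ?thesis by simp
qed

lemma main:
  fixes g :: "'a \<Rightarrow> real" and a b m :: real
  assumes "finite S"
  shows "\<And>A B L. A \<in> sets lebesgue \<Longrightarrow> A \<subseteq> {0..1::real} \<Longrightarrow> B \<in> sets lebesgue \<Longrightarrow> B \<subseteq> {0..1} \<Longrightarrow>
    (\<forall>v\<in>S. L v \<in> sets lebesgue \<and> L v \<subseteq> {0..1} \<and> measure lebesgue (L v) \<ge> m + sum g S) \<Longrightarrow>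
    (\<forall>v\<in>S. 0 \<le> g v) \<Longrightarrow> measure lebesgue A \<ge> a \<Longrightarrow> measure lebesgue B \<ge> b \<Longrightarrow>
    measure lebesgue A + measure lebesgue B \<ge> a + b + sum g S \<Longrightarrow> 0 \<le> a \<Longrightarrow> a \<le> m \<Longrightarrow> b \<le> m \<Longrightarrow>
    \<exists>\<phi> X Y. X \<in> sets lebesgue \<and> X \<subseteq> A \<and> measure lebesgue X \<ge> a \<and>
      Y \<in> sets lebesgue \<and> Y \<subseteq> B \<and> measure lebesgue Y \<ge> b \<and>
      (\<forall>v\<in>S. \<phi> v \<in> sets lebesgue \<and> \<phi> v \<subseteq> L v \<and> measure lebesgue (\<phi> v) \<ge> g v \<and>
          \<phi> v \<inter> X = {} \<and> \<phi> v \<inter> Y = {}) \<and>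
      (\<forall>u\<in>S. \<forall>v\<in>S. u \<noteq> v \<longrightarrow> \<phi> u \<inter> \<phi> v = {})"
  using assms
proof (induction S rule: finite_induct)
  case empty
  then show ?case by (intro exI[of _ "\<lambda>_. {}"] exI[of _ A] exI[of _ B]) auto
next
  case (insert v S A B L)
  have sg: "sum g (insert v S) = g v + sum g S" using insert(1,2) by simp
  have gS: "0 \<le> sum g S" using insert.prems(6) by (intro sum_nonneg) auto
  obtain T where T: "T \<in> sets lebesgue" "T \<subseteq> L v" "measure lebesgue T = g v"
     "measure lebesgue (A - T) \<ge> a" "measure lebesgue (B - T) \<ge> b"
     "measure lebesgue (A - T) + measure lebesgue (B - T) \<ge> a + b + (sum g (insert v S) - g v)"
  proof -
    have Lv: "L v \<in> sets lebesgue" "L v \<subseteq> {0..1}" "measure lebesgue (L v) \<ge> m + sum g (insert v S)"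
      using insert.prems(5) by auto
    have gv: "0 \<le> g v" "g v \<le> sum g (insert v S)" using insert.prems(6) sg gS by auto
    show ?thesis using step[OF insert.prems(1-4) Lv(1,2) insert.prems(7-9) Lv(3) gv insert.prems(10-12)]
      by (elim exE conjE) (rule that; assumption)
  qed
  have Tl: "T \<in> lmeasurable" using T(1,2) insert.prems(5) lmeas_sub by (meson order_trans insertI1)
  have L': "\<forall>w\<in>S. L w - T \<in> sets lebesgue \<and> L w - T \<subseteq> {0..1} \<and> measure lebesgue (L w - T) \<ge> m + sum g S"
  proof
    fix w assume w: "w \<in> S"
    then have Lw: "L w \<in> sets lebesgue" "L w \<subseteq> {0..1}" "measure lebesgue (L w) \<ge> m + sum g (insert v S)"
      using insert.prems(5) by auto
    have "measure lebesgue (L w - T) \<ge> measure lebesgue (L w) - measure lebesgue T"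
      using diff_ge[OF lmeas_sub[OF Lw(1,2)] Tl] .
    then show "L w - T \<in> sets lebesgue \<and> L w - T \<subseteq> {0..1} \<and> measure lebesgue (L w - T) \<ge> m + sum g S"
      using Lw T(1,3) sg by auto
  qed
  obtain \<phi> X Y where IH: "X \<in> sets lebesgue" "X \<subseteq> A - T" "measure lebesgue X \<ge> a"
      "Y \<in> sets lebesgue" "Y \<subseteq> B - T" "measure lebesgue Y \<ge> b"
      "\<forall>w\<in>S. \<phi> w \<in> sets lebesgue \<and> \<phi> w \<subseteq> L w - T \<and> measure lebesgue (\<phi> w) \<ge> g w \<and>
          \<phi> w \<inter> X = {} \<and> \<phi> w \<inter> Y = {}"
      "\<forall>u\<in>S. \<forall>w\<in>S. u \<noteq> w \<longrightarrow> \<phi> u \<inter> \<phi> w = {}"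
  proof -
    have AT: "A - T \<in> sets lebesgue" "A - T \<subseteq> {0..1}" "B - T \<in> sets lebesgue" "B - T \<subseteq> {0..1}"
      using insert.prems(1-4) T(1) by auto
    have gS': "\<forall>w\<in>S. 0 \<le> g w" using insert.prems(6) by auto
    have sm: "measure lebesgue (A - T) + measure lebesgue (B - T) \<ge> a + b + sum g S" using T(6) sg by simp
    show ?thesis using insert.IH[of "A - T" "B - T" "\<lambda>w. L w - T", OF AT L' gS' T(4,5) sm insert.prems(10-12)]
      by (elim exE conjE) (rule that; assumption)
  qed
  show ?case
    apply (rule exI[of _ "\<phi>(v := T)"], rule exI[of _ X], rule exI[of _ Y])
  proof (intro conjI ballI impI)
    show "X \<in> sets lebesgue" "X \<subseteq> A" "a \<le> measure lebesgue X"
         "Y \<in> sets lebesgue" "Y \<subseteq> B" "b \<le> measure lebesgue Y" using IH(1-6) by auto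
  next
    fix w assume w: "w \<in> insert v S"
    show "(\<phi>(v := T)) w \<in> sets lebesgue" using w T IH(2,5,7) by (cases "w = v") auto
  next
    fix w assume w: "w \<in> insert v S"
    show "(\<phi>(v := T)) w \<subseteq> L w" using w T IH(2,5,7) by (cases "w = v") auto
  next
    fix w assume w: "w \<in> insert v S"
    show "g w \<le> measure lebesgue ((\<phi>(v := T)) w)" using w T IH(2,5,7) by (cases "w = v") auto
  next
    fix w assume w: "w \<in> insert v S"
    show "(\<phi>(v := T)) w \<inter> X = {}" using w T IH(2,5,7) by (cases "w = v") auto
  next
    fix w assume w: "w \<in> insert v S"
    show "(\<phi>(v := T)) w \<inter> Y = {}" using w T IH(2,5,7) by (cases "w = v") auto
  next
    fix u w assume u: "u \<in> insert v S" and w: "w \<in> insert v S" and uw: "u \<noteq> w"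
    show "(\<phi>(v := T)) u \<inter> (\<phi>(v := T)) w = {}"
    proof (cases "u = v")
      case True
      then have "w \<in> S" using w uw by simp
      then show ?thesis using IH(7) True uw by auto
    next
      case False
      then have u': "u \<in> S" using u by simp
      show ?thesis
      proof (cases "w = v")
        case True then show ?thesis using IH(7) u' False by auto
      next
        case False2: False
        then have "w \<in> S" using w by simp
        then show ?thesis using IH(8) u' False False2 uw by auto
      qed
    qed
  qed
qed

theorem corollary2p12:
  fixes V :: "'a set" and x y :: 'a and g :: "'a \<Rightarrow> real" and L :: "'a \<Rightarrow> real set"
  assumes "finite V" and "x \<in> V" and "y \<in> V" and "x \<noteq> y"
    and "demand_function V g"
    and "frac_list_assignment V L"
    and "\<forall>v\<in>V - {x, y}. measure lebesgue (L v) \<ge> max (g x) (g y) + (\<Sum>u\<in>V - {x, y}. g u)"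
    and "measure lebesgue (L x) \<ge> g x" and "measure lebesgue (L y) \<ge> g y"
    and "measure lebesgue (L x) + measure lebesgue (L y) \<ge> (\<Sum>v\<in>V. g v)"
  shows "\<exists>\<phi>. frac_coloring V (Kn_minus_edge V x y) g L \<phi>"
proof -
  define S where "S = V - {x, y}"
  have fS: "finite S" using assms(1) unfolding S_def by simp
  have dem: "\<forall>v\<in>V. 0 \<le> g v" using assms(5) unfolding demand_function_def by auto
  have fl: "\<forall>v\<in>V. L v \<in> sets lebesgue \<and> L v \<subseteq> {0..1}" using assms(6) unfolding frac_list_assignment_def by auto
  have sumV: "sum g V = g x + g y + sum g S"
  proof -
    have "sum g V = g x + sum g (V - {x})" using assms(1,2) by (simp add: sum.remove)
    also have "sum g (V - {x}) = g y + sum g (V - {x} - {y})" using assms(1,3,4) by (simp add: sum.remove)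
    also have "V - {x} - {y} = S" unfolding S_def by auto
    finally show ?thesis by simp
  qed
  have Lprem: "\<forall>v\<in>S. L v \<in> sets lebesgue \<and> L v \<subseteq> {0..1} \<and> measure lebesgue (L v) \<ge> max (g x) (g y) + sum g S"
    using fl assms(7) unfolding S_def by auto
  have gprem: "\<forall>v\<in>S. 0 \<le> g v" using dem unfolding S_def by auto
  have ex: "\<exists>\<phi> X Y. X \<in> sets lebesgue \<and> X \<subseteq> L x \<and> measure lebesgue X \<ge> g x \<and>
      Y \<in> sets lebesgue \<and> Y \<subseteq> L y \<and> measure lebesgue Y \<ge> g y \<and>
      (\<forall>v\<in>S. \<phi> v \<in> sets lebesgue \<and> \<phi> v \<subseteq> L v \<and> measure lebesgue (\<phi> v) \<ge> g v \<and>
          \<phi> v \<inter> X = {} \<and> \<phi> v \<inter> Y = {}) \<and>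
      (\<forall>u\<in>S. \<forall>v\<in>S. u \<noteq> v \<longrightarrow> \<phi> u \<inter> \<phi> v = {})"
    by (rule main[OF fS, where A="L x" and B="L y" and L=L and m="max (g x) (g y)" and a="g x" and b="g y" and g=g]) (use fl assms(2,3,8,9,10) Lprem gprem sumV dem in auto)
  then obtain \<phi> X Y where X: "X \<in> sets lebesgue" "X \<subseteq> L x" "measure lebesgue X \<ge> g x"
      and Y: "Y \<in> sets lebesgue" "Y \<subseteq> L y" "measure lebesgue Y \<ge> g y"
      and P: "\<forall>v\<in>S. \<phi> v \<in> sets lebesgue \<and> \<phi> v \<subseteq> L v \<and> measure lebesgue (\<phi> v) \<ge> g v \<and>
          \<phi> v \<inter> X = {} \<and> \<phi> v \<inter> Y = {}"
      and D: "\<forall>u\<in>S. \<forall>v\<in>S. u \<noteq> v \<longrightarrow> \<phi> u \<inter> \<phi> v = {}"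
    by (elim exE conjE) (rule that; assumption)
  define \<psi> where "\<psi> = \<phi>(x := X, y := Y)"
  have \<psi>x: "\<psi> x = X" and \<psi>y: "\<psi> y = Y" unfolding \<psi>_def using assms(4) by auto
  have \<psi>S: "\<psi> v = \<phi> v" if "v \<in> S" for v using that unfolding \<psi>_def S_def by auto
  have V: "v \<in> S \<or> v = x \<or> v = y" if "v \<in> V" for v using that unfolding S_def by auto
  have "frac_coloring V (Kn_minus_edge V x y) g L \<psi>"
    unfolding frac_coloring_def
  proof (rule conjI; intro ballI impI)
    fix v assume v: "v \<in> V"
    show "\<psi> v \<in> sets lebesgue \<and> \<psi> v \<subseteq> L v \<and> g v \<le> measure lebesgue (\<psi> v)"
    proof -
      consider "v \<in> S" | "v = x" | "v = y" using V[OF v] by blast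
      then show ?thesis
      proof cases
        case 1 then show ?thesis using P \<psi>S[OF 1] by simp
      next
        case 2 then show ?thesis using X \<psi>x by simp
      next
        case 3 then show ?thesis using Y \<psi>y by simp
      qed
    qed
  next
    fix u v assume u: "u \<in> V" and v: "v \<in> V" and E: "Kn_minus_edge V x y u v"
    then have uv: "u \<noteq> v" "{u, v} \<noteq> {x, y}" unfolding Kn_minus_edge_def by auto
    show "\<psi> u \<inter> \<psi> v = {}"
    proof -
      have vd: "v \<in> S \<or> v = x \<or> v = y" using V[OF v] .
      consider "u \<in> S" | "u = x" | "u = y" using V[OF u] by blast
      then show ?thesis
      proof cases
        case 1
        note u1 = 1
        from \<open>v \<in> S \<or> v = x \<or> v = y\<close> show ?thesis
        proof (elim disjE)
          assume "v \<in> S" then show ?thesis using u1 D uv \<psi>S by simp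
        next
          assume "v = x" then show ?thesis using u1 P \<psi>S[OF u1] \<psi>x by blast
        next
          assume "v = y" then show ?thesis using u1 P \<psi>S[OF u1] \<psi>y by blast
        qed
      next
        case 2
        from \<open>v \<in> S \<or> v = x \<or> v = y\<close> show ?thesis
        proof (elim disjE)
          assume "v \<in> S" then show ?thesis using 2 P \<psi>S \<psi>x by blast
        next
          assume "v = x" then show ?thesis using 2 uv by simp
        next
          assume "v = y" then show ?thesis using 2 uv by simp
        qed
      next
        case 3
        from \<open>v \<in> S \<or> v = x \<or> v = y\<close> show ?thesis
        proof (elim disjE)
          assume "v \<in> S" then show ?thesis using 3 P \<psi>S \<psi>y by blast
        next
          assume "v = x" then show ?thesis using 3 uv by (simp add: insert_commute)
        next
          assume "v = y" then show ?thesis using 3 uv by simp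
        qed
      qed
    qed
  qed
  then show ?thesis by blast
qed

end
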